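(* Let $q$ be a positive integer, $N< \sqrt{q}$ and $x = \frac{\phi(q)}{N}$. Let $r$ be a completely multiplicative function with $r(p) \geq 0$ for all primes $p$ and $r(p)=0$ whenever $p\mid q$. Set \[ B = \frac{\sum_{n = 1}^\infty r(n)^2}{\sum_{n \leq x/N} r(n)^2}.\] Then \[\Delta(N,q) \geq O(1) + \frac{1}{B} \sum_{n \leq N} r(n),\] where $O(1)$ denotes a quantity bounded in absolute value by an absolute constant. Furthermore, let $M$ be minimal such that $\sum_{p \leq M} \log p > \log q$ (sum over primes). The same bound remains valid if the hypothesis "$p \mid q \Rightarrow r(p) = 0$" is replaced by "$p\leq M \Rightarrow r(p) = 0$".
   Context: $\phi$ is Euler's totient function. For a positive integer $q$ and real $N\ge 1$, $\Delta(N,q) = \sup_{\chi \neq \chi_0 \bmod q} \left| \sum_{n \leq N}\chi(n)\right|$, the supremum over non-principal Dirichlet characters $\chi$ modulo $q$. *)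

theory Defs
  imports "HOL-Analysis.Analysis" "HOL-Number_Theory.Number_Theory"
begin

definition dirichlet_char :: "nat \<Rightarrow> (nat \<Rightarrow> complex) \<Rightarrow> bool" where
  "dirichlet_char q chi \<longleftrightarrow>
     q > 0 \<and> chi 1 = 1 \<and>
     (\<forall>m n. chi (m * n) = chi m * chi n) \<and>
     (\<forall>n. chi (n + q) = chi n) \<and>
     (\<forall>n. chi n \<noteq> 0 \<longleftrightarrow> coprime n q)"

definition principal_char :: "nat \<Rightarrow> (nat \<Rightarrow> complex) \<Rightarrow> bool" where
  "principal_char q chi \<longleftrightarrow> (\<forall>n. coprime n q \<longrightarrow> chi n = 1)"

text \<open>The element 0 is added so that the supremum is 0
  when there is no non-principal character (q <= 2); otherwise it does not change it.\<close>
definition Delta :: "real \<Rightarrow> nat \<Rightarrow> real" where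
  "Delta N q = Sup ({0} \<union> {norm (\<Sum>n\<in>{1..nat \<lfloor>N\<rfloor>}. chi n) | chi.
                        dirichlet_char q chi \<and> \<not> principal_char q chi})"

definition compl_mult :: "(nat \<Rightarrow> real) \<Rightarrow> bool" where
  "compl_mult r \<longleftrightarrow> r 1 = 1 \<and> (\<forall>m n. m > 0 \<longrightarrow> n > 0 \<longrightarrow> r (m * n) = r m * r n)"

text \<open>1/B where B = (sum_{n>=1} r(n)^2) / (sum_{n <= y} r(n)^2); if the series
  diverges, B = infinity and 1/B = 0.\<close>
definition invB :: "(nat \<Rightarrow> real) \<Rightarrow> real \<Rightarrow> real" where
  "invB r y = (if summable (\<lambda>n. r (Suc n) ^ 2)
               then (\<Sum>n\<in>{1..nat \<lfloor>y\<rfloor>}. r n ^ 2) / (\<Sum>n. r (Suc n) ^ 2)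
               else 0)"

definition Mq :: "nat \<Rightarrow> nat" where
  "Mq q = (LEAST M. (\<Sum>p\<in>{p. prime p \<and> p \<le> M}. ln (real p)) > ln (real q))"

end

theory Submission
  imports Defs "HOL-Algebra.Multiplicative_Group"
begin


definition closed_sub :: "('a, 'b) monoid_scheme \<Rightarrow> 'a set \<Rightarrow> bool" where
  "closed_sub G H \<longleftrightarrow> H \<subseteq> carrier G \<and> \<one>\<^bsub>G\<^esub> \<in> H \<and> (\<forall>x\<in>H. \<forall>y\<in>H. x \<otimes>\<^bsub>G\<^esub> y \<in> H)"

definition is_char_on :: "('a, 'b) monoid_scheme \<Rightarrow> 'a set \<Rightarrow> ('a \<Rightarrow> complex) \<Rightarrow> bool" where
  "is_char_on G H f \<longleftrightarrow> f \<one>\<^bsub>G\<^esub> = 1 \<and> (\<forall>x\<in>H. \<forall>y\<in>H. f (x \<otimes>\<^bsub>G\<^esub> y) = f x * f y)"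

locale ext_ctx = comm_group G for G (structure) +
  fixes H :: "'a set" and f :: "'a \<Rightarrow> complex" and g :: 'a and m :: nat and z :: complex
  assumes fin: "finite (carrier G)"
    and Hc: "closed_sub G H" and fc: "is_char_on G H f"
    and gG: "g \<in> carrier G" and gH: "g \<notin> H"
    and m_def: "m = (LEAST n. 0 < n \<and> g [^] n \<in> H)"
    and z: "z ^ m = f (g [^] m)"
begin

lemma HG: "H \<subseteq> carrier G" using Hc by (simp add: closed_sub_def)
lemma one_H: "\<one> \<in> H" using Hc by (simp add: closed_sub_def)
lemma mult_H: "x \<in> H \<Longrightarrow> y \<in> H \<Longrightarrow> x \<otimes> y \<in> H" using Hc by (simp add: closed_sub_def)

lemma pow_H: "x \<in> H \<Longrightarrow> x [^] (n::nat) \<in> H"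
proof (induction n)
  case 0 then show ?case using one_H by simp
next
  case (Suc n) then show ?case using mult_H HG by (auto simp: nat_pow_Suc)
qed

lemma inv_H: assumes "x \<in> H" shows "inv x \<in> H"
proof -
  have xG: "x \<in> carrier G" using assms HG by auto
  have o: "order G > 0" using fin order_gt_0_iff_finite by blast
  have "x [^] (order G - 1) \<otimes> x = x [^] (order G - 1 + 1)"
    using xG by (simp add: nat_pow_mult)
  also have "\<dots> = \<one>" using o xG pow_order_eq_1[OF xG] by simp
  finally have "inv x = x [^] (order G - 1)" using xG by (intro inv_equality) auto
  then show ?thesis using pow_H assms by simp
qed

lemma m_props: "0 < m \<and> g [^] m \<in> H"
proof -
  have "0 < order G \<and> g [^] order G \<in> H"
    using fin order_gt_0_iff_finite pow_order_eq_1[OF gG] one_H by auto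
  then show ?thesis unfolding m_def by (rule LeastI)
qed

lemma m_min: "0 < n \<Longrightarrow> g [^] n \<in> H \<Longrightarrow> m \<le> n"
  unfolding m_def by (rule Least_le) simp

lemma m_ge2: "m \<ge> 2"
proof -
  have "m \<noteq> 1" using m_props gH gG by auto
  then show ?thesis using m_props by linarith
qed

lemma rep_uniq_aux:
  assumes h: "h \<in> H" "h' \<in> H" and ij: "i \<le> j" "j < m"
    and eq: "h \<otimes> g [^] i = h' \<otimes> g [^] j"
  shows "i = j \<and> h = h'"
proof -
  have hG: "h \<in> carrier G" "h' \<in> carrier G" using h HG by auto
  have XG: "g [^] i \<in> carrier G" "g [^] (j - i) \<in> carrier G" using gG by auto
  have YG: "h' \<otimes> g [^] (j - i) \<in> carrier G" using hG XG by auto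
  have pj: "g [^] j = g [^] (j - i) \<otimes> g [^] i" using ij gG by (simp add: nat_pow_mult)
  have "h \<otimes> g [^] i = h' \<otimes> (g [^] (j - i) \<otimes> g [^] i)"
    using eq unfolding pj .
  also have "\<dots> = (h' \<otimes> g [^] (j - i)) \<otimes> g [^] i"
    using hG XG by (simp add: m_assoc)
  finally have e1: "h \<otimes> g [^] i = (h' \<otimes> g [^] (j - i)) \<otimes> g [^] i" .
  have e2: "h = h' \<otimes> g [^] (j - i)"
    using right_cancel[OF XG(1) hG(1) YG] e1 by blast
  have "inv h' \<otimes> h = inv h' \<otimes> (h' \<otimes> g [^] (j - i))" using e2 by simp
  also have "\<dots> = (inv h' \<otimes> h') \<otimes> g [^] (j - i)"
    using hG XG by (intro m_assoc[symmetric]) auto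
  also have "\<dots> = g [^] (j - i)" using hG XG by simp
  finally have e3: "inv h' \<otimes> h = g [^] (j - i)" .
  have "inv h' \<otimes> h \<in> H" using h inv_H mult_H by auto
  then have "g [^] (j - i) \<in> H" using e3 by simp
  then have "i < j \<Longrightarrow> m \<le> j - i" using m_min[of "j - i"] by auto
  then have "i = j" using ij by linarith
  then show ?thesis using e2 hG by simp
qed

lemma rep_uniq:
  assumes "h \<in> H" "h' \<in> H" "i < m" "j < m" "h \<otimes> g [^] i = h' \<otimes> g [^] j"
  shows "i = j \<and> h = h'"
  using rep_uniq_aux[of h h' i j] rep_uniq_aux[of h' h j i] assms by (cases "i \<le> j") auto

definition "H' = {h \<otimes> g [^] i |h i. h \<in> H \<and> i < m}"
definition "f' x = (SOME v. \<exists>h i. h \<in> H \<and> i < m \<and> x = h \<otimes> g [^] i \<and> v = f h * z ^ i)"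

lemma f'_eq: assumes "h \<in> H" "i < m" shows "f' (h \<otimes> g [^] i) = f h * z ^ i"
proof -
  let ?P = "\<lambda>v. \<exists>h' i'. h' \<in> H \<and> i' < m \<and> h \<otimes> g [^] i = h' \<otimes> g [^] i' \<and> v = f h' * z ^ i'"
  have ex: "\<exists>v. ?P v" using assms by blast
  have "f' (h \<otimes> g [^] i) = (SOME v. ?P v)" by (simp add: f'_def)
  with someI_ex[OF ex] obtain h' i' where "h' \<in> H" "i' < m" "h \<otimes> g [^] i = h' \<otimes> g [^] i'"
    "f' (h \<otimes> g [^] i) = f h' * z ^ i'" by auto
  then show ?thesis using rep_uniq[of h h' i i'] assms by auto
qed

lemma memH': "h \<in> H \<Longrightarrow> i < m \<Longrightarrow> h \<otimes> g [^] i \<in> H'"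
  unfolding H'_def by blast

lemma H'G: "H' \<subseteq> carrier G" using HG gG by (auto simp: H'_def)

lemma H_sub: "H \<subseteq> H'"
proof
  fix x assume "x \<in> H"
  then have "x = x \<otimes> g [^] (0::nat)" "0 < m" using HG m_props by auto
  then show "x \<in> H'" unfolding H'_def using \<open>x \<in> H\<close> by blast
qed

lemma g_H': "g \<in> H'"
proof -
  have "\<exists>h i. g = h \<otimes> g [^] i \<and> h \<in> H \<and> i < m"
    using gG one_H m_ge2 by (intro exI[of _ "\<one>"] exI[of _ "1::nat"]) auto
  then show ?thesis by (simp add: H'_def)
qed

lemma f'_on_H: "x \<in> H \<Longrightarrow> f' x = f x"
  using f'_eq[of x 0] m_props HG by auto

lemma f'_g: "f' g = z"
  using f'_eq[of "\<one>" 1] one_H m_ge2 gG fc by (simp add: is_char_on_def)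

lemma mult_rep:
  assumes "h \<in> H" "h' \<in> H" "i < m" "j < m"
  shows "(h \<otimes> g [^] i) \<otimes> (h' \<otimes> g [^] j) \<in> H' \<and>
         f' ((h \<otimes> g [^] i) \<otimes> (h' \<otimes> g [^] j)) = f h * z ^ i * (f h' * z ^ j)"
proof -
  have hG: "h \<in> carrier G" "h' \<in> carrier G" using assms HG by auto
  have fm: "f (x \<otimes> y) = f x * f y" if "x \<in> H" "y \<in> H" for x y
    using fc that by (simp add: is_char_on_def)
  have e1: "(h \<otimes> g [^] i) \<otimes> (h' \<otimes> g [^] j) = (h \<otimes> h') \<otimes> g [^] (i + j)"
  proof -
    have "(h \<otimes> g [^] i) \<otimes> (h' \<otimes> g [^] j) = (h \<otimes> h') \<otimes> (g [^] i \<otimes> g [^] j)"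
      using hG gG by (simp add: m_ac)
    also have "\<dots> = (h \<otimes> h') \<otimes> g [^] (i + j)" using gG by (simp add: nat_pow_mult)
    finally show ?thesis .
  qed
  show ?thesis
  proof (cases "i + j < m")
    case True
    have "h \<otimes> h' \<in> H" using assms mult_H by auto
    then show ?thesis using e1 True f'_eq[of "h \<otimes> h'" "i+j"] fm[of h h'] assms memH'[of "h \<otimes> h'" "i+j"]
      by (simp add: power_add)
  next
    case False
    have e2: "g [^] (i + j) = g [^] m \<otimes> g [^] (i + j - m)"
      using False gG by (simp add: nat_pow_mult)
    have hh: "h \<otimes> h' \<otimes> g [^] m \<in> H" using assms mult_H m_props by auto
    have lt: "i + j - m < m" using assms by linarith
    have e3: "(h \<otimes> g [^] i) \<otimes> (h' \<otimes> g [^] j) = (h \<otimes> h' \<otimes> g [^] m) \<otimes> g [^] (i + j - m)"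
      using e1 e2 hG gG by (simp add: m_assoc)
    have "f' ((h \<otimes> g [^] i) \<otimes> (h' \<otimes> g [^] j)) = f h * f h' * z ^ m * z ^ (i + j - m)"
      using e3 f'_eq[OF hh lt] fm assms mult_H m_props z by simp
    also have "\<dots> = f h * f h' * z ^ (i + j)"
      using False by (simp add: power_add[symmetric] mult.assoc)
    finally show ?thesis using e3 hh lt memH' by (simp add: power_add mult_ac)
  qed
qed

lemma H'_closed: "closed_sub G H'"
proof -
  have "\<one> \<in> H'" using H_sub one_H by auto
  moreover have "x \<otimes> y \<in> H'" if xH: "x \<in> H'" and yH: "y \<in> H'" for x y
  proof -
    obtain h i where "h \<in> H" "i < m" "x = h \<otimes> g [^] i" using xH unfolding H'_def by blast
    moreover obtain h' j where "h' \<in> H" "j < m" "y = h' \<otimes> g [^] j" using yH unfolding H'_def by blast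
    ultimately show ?thesis using mult_rep[of h h' i j] by simp
  qed
  ultimately show ?thesis using H'G by (simp add: closed_sub_def)
qed

lemma f'_char: "is_char_on G H' f'"
proof -
  have "f' \<one> = 1" using f'_on_H one_H fc by (simp add: is_char_on_def)
  moreover have "f' (x \<otimes> y) = f' x * f' y" if xH: "x \<in> H'" and yH: "y \<in> H'" for x y
  proof -
    obtain h i where "h \<in> H" "i < m" "x = h \<otimes> g [^] i" using xH unfolding H'_def by blast
    moreover obtain h' j where "h' \<in> H" "j < m" "y = h' \<otimes> g [^] j" using yH unfolding H'_def by blast
    ultimately show ?thesis using mult_rep[of h h' i j] f'_eq[of h i] f'_eq[of h' j] by simp
  qed
  ultimately show ?thesis by (simp add: is_char_on_def)
qed

lemma step: "\<exists>H2 f2. closed_sub G H2 \<and> is_char_on G H2 f2 \<and> H \<subset> H2 \<and> H2 \<subseteq> carrier G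
   \<and> (\<forall>x\<in>H. f2 x = f x) \<and> f2 g = z"
  using H'_closed f'_char H_sub g_H' gH H'G f'_on_H f'_g by blast

end


lemma complex_root_ex: assumes "n > 0" shows "\<exists>w::complex. w ^ n = z"
proof (cases "z = 0")
  case True then show ?thesis using assms by (intro exI[of _ 0]) simp
next
  case False
  have e: "of_nat n * (Ln z / of_nat n) = Ln z" using assms by (simp add: field_simps)
  have "exp (Ln z / of_nat n) ^ n = exp (of_nat n * (Ln z / of_nat n))"
    by (simp only: exp_of_nat_mult)
  also have "\<dots> = z" unfolding e using False by simp
  finally show ?thesis by blast
qed

lemma char_extend:
  fixes G (structure)
  assumes G: "comm_group G" "finite (carrier G)"
  shows "closed_sub G H \<Longrightarrow> is_char_on G H f \<Longrightarrow> \<exists>F. is_char_on G (carrier G) F \<and> (\<forall>x\<in>H. F x = f x)"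
proof (induction "card (carrier G - H)" arbitrary: H f rule: less_induct)
  case less
  have HG: "H \<subseteq> carrier G" using less.prems by (simp add: closed_sub_def)
  show ?case
  proof (cases "H = carrier G")
    case True then show ?thesis using less.prems by blast
  next
    case False
    then obtain g where gG: "g \<in> carrier G" and gH: "g \<notin> H" using HG by blast
    define m where "m = (LEAST n::nat. 0 < n \<and> g [^]\<^bsub>G\<^esub> n \<in> H)"
    have "m > 0"
    proof -
      interpret comm_group G by (rule G(1))
      have "0 < order G \<and> g [^] order G \<in> H"
        using G(2) order_gt_0_iff_finite pow_order_eq_1[OF gG] less.prems by (auto simp: closed_sub_def)
      then show ?thesis unfolding m_def by (metis (mono_tags, lifting) LeastI)
    qed
    then obtain z where z: "z ^ m = f (g [^]\<^bsub>G\<^esub> m)" using complex_root_ex by blast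
    interpret E: ext_ctx G H f g m z
      using G less.prems gG gH m_def z unfolding ext_ctx_def ext_ctx_axioms_def by blast
    obtain H2 f2 where H2: "closed_sub G H2" "is_char_on G H2 f2" "H \<subset> H2" "H2 \<subseteq> carrier G"
      "\<forall>x\<in>H. f2 x = f x" using E.step by blast
    have "card (carrier G - H2) < card (carrier G - H)"
      using H2(3,4) HG G(2) by (intro psubset_card_mono) auto
    then obtain F where F1: "is_char_on G (carrier G) F" and F2: "\<forall>x\<in>H2. F x = f2 x"
      using less.hyps[OF _ H2(1,2)] by blast
    have "\<forall>x\<in>H. F x = f x"
    proof
      fix x assume "x \<in> H"
      then have "x \<in> H2" using H2(3) by blast
      then show "F x = f x" using F2 H2(5) \<open>x \<in> H\<close> by simp
    qed
    then show ?thesis using F1 by blast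
  qed
qed

lemma char_sep:
  fixes G (structure)
  assumes G: "comm_group G" "finite (carrier G)" and a: "a \<in> carrier G" "a \<noteq> \<one>\<^bsub>G\<^esub>"
  shows "\<exists>F. is_char_on G (carrier G) F \<and> F a \<noteq> 1"
proof -
  interpret comm_group G by (rule G(1))
  define m where "m = (LEAST n::nat. 0 < n \<and> a [^] n \<in> {\<one>})"
  define z where "z = exp (2 * of_real pi * \<i> / of_nat m)"
  have cs: "closed_sub G {\<one>}" by (simp add: closed_sub_def)
  have cf: "is_char_on G {\<one>} (\<lambda>_. 1)" by (simp add: is_char_on_def)
  have m0: "m > 0"
  proof -
    have "0 < order G \<and> a [^] order G \<in> {\<one>}"
      using G(2) order_gt_0_iff_finite pow_order_eq_1[OF a(1)] by auto
    then show ?thesis unfolding m_def by (metis (mono_tags, lifting) LeastI)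
  qed
  have zm: "z ^ m = 1"
  proof -
    have "z ^ m = exp (of_nat m * (2 * of_real pi * \<i> / of_nat m))"
      unfolding z_def by (simp only: exp_of_nat_mult)
    also have "\<dots> = exp (2 * of_real pi * \<i>)" using m0 by simp
    finally show ?thesis by simp
  qed
  interpret E: ext_ctx G "{\<one>}" "\<lambda>_. 1" a m z
    using G cs cf a m_def zm unfolding ext_ctx_def ext_ctx_axioms_def by auto
  have m2: "m \<ge> 2" by (rule E.m_ge2)
  obtain H2 f2 where H2: "closed_sub G H2" "is_char_on G H2 f2" "a \<in> H2" "f2 a = z"
    using E.step E.g_H' E.H'_closed E.f'_char E.f'_g by blast
  obtain F where F: "is_char_on G (carrier G) F" "\<forall>x\<in>H2. F x = f2 x"
    using char_extend[OF G H2(1,2)] by blast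
  have "z \<noteq> 1"
  proof
    assume "z = 1"
    then obtain k :: int where k0: "Im (2 * of_real pi * \<i> / of_nat m) = real_of_int (2 * k) * pi"
      unfolding z_def exp_eq_1 by blast
    then have k: "Im (2 * of_real pi * \<i> / of_nat m) = 2 * pi * k" by simp
    have "Im (2 * of_real pi * \<i> / of_nat m) = 2 * pi / m" by simp
    with k have "(2 * pi) * (1 / real m) = (2 * pi) * k" by simp
    then have "1 / real m = k" using pi_gt_zero by (subst (asm) mult_cancel_left) simp
    moreover have "0 < 1 / real m" "1 / real m < 1" using m2 by auto
    ultimately have "0 < k" "k < 1" by simp_all
    then show False by simp
  qed
  then show ?thesis using F H2 by auto
qed



definition Zq :: "nat \<Rightarrow> nat monoid" where
  "Zq q = \<lparr>carrier = {a. a < q}, mult = (\<lambda>a b. a * b mod q), one = 1\<rparr>"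

locale qmod = fixes q :: nat assumes q2: "q \<ge> 2"
begin

lemma q0: "q > 0" using q2 by simp

lemma Zq_cm: "comm_monoid (Zq q)"
proof (rule comm_monoidI)
  show "\<And>x y. x \<in> carrier (Zq q) \<Longrightarrow> y \<in> carrier (Zq q) \<Longrightarrow> x \<otimes>\<^bsub>Zq q\<^esub> y \<in> carrier (Zq q)"
    using q0 by (simp add: Zq_def)
  show "\<one>\<^bsub>Zq q\<^esub> \<in> carrier (Zq q)" using q2 by (simp add: Zq_def)
  show "\<And>x y z. x \<in> carrier (Zq q) \<Longrightarrow> y \<in> carrier (Zq q) \<Longrightarrow> z \<in> carrier (Zq q) \<Longrightarrow>
      x \<otimes>\<^bsub>Zq q\<^esub> y \<otimes>\<^bsub>Zq q\<^esub> z = x \<otimes>\<^bsub>Zq q\<^esub> (y \<otimes>\<^bsub>Zq q\<^esub> z)"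
    by (simp add: Zq_def mod_mult_left_eq mod_mult_right_eq mult.assoc)
  show "\<And>x. x \<in> carrier (Zq q) \<Longrightarrow> \<one>\<^bsub>Zq q\<^esub> \<otimes>\<^bsub>Zq q\<^esub> x = x"
    by (simp add: Zq_def)
  show "\<And>x y. x \<in> carrier (Zq q) \<Longrightarrow> y \<in> carrier (Zq q) \<Longrightarrow> x \<otimes>\<^bsub>Zq q\<^esub> y = y \<otimes>\<^bsub>Zq q\<^esub> x"
    by (simp add: Zq_def mult.commute)
qed

abbreviation "U \<equiv> units_of (Zq q)"

lemma U_cg: "comm_group U"
  using Zq_cm comm_monoid.units_comm_group by blast

lemma U_fin: "finite (carrier U)"
proof -
  have "carrier U \<subseteq> {a. a < q}" by (auto simp: units_of_carrier Units_def Zq_def)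
  then show ?thesis using finite_subset by blast
qed

lemma U_mult: "x \<otimes>\<^bsub>U\<^esub> y = x * y mod q" by (simp add: units_of_mult Zq_def)
lemma U_one: "\<one>\<^bsub>U\<^esub> = 1" by (simp add: units_of_one Zq_def)

lemma inv_ex: assumes "coprime n q" shows "\<exists>b. coprime b q \<and> (n * b) mod q = 1"
proof -
  have "n \<noteq> 0"
  proof
    assume "n = 0" then have "q = 1" using assms by simp
    then show False using q2 by simp
  qed
  then obtain x y where "n * x = q * y + gcd n q" using bezout_nat by blast
  then have "n * x = 1 + q * y" using assms by simp
  then have "(n * x) mod q = (1 + q * y) mod q" by simp
  also have "\<dots> = 1 mod q" by (metis mult.commute mod_mult_self1)
  finally have e: "(n * x) mod q = 1" using q2 by simp
  then have "coprime (n * x) q" using q0 by (metis coprime_1_left coprime_mod_left_iff not_gr0)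
  then show ?thesis using e by auto
qed

lemma coprime_U: assumes "coprime n q" shows "n mod q \<in> carrier U"
proof -
  obtain b where b: "coprime b q" "(n * b) mod q = 1" using inv_ex[OF assms] by blast
  have "n mod q < q" "b mod q < q" using q0 by auto
  moreover have "(n mod q) * (b mod q) mod q = 1" using b by (simp add: mod_mult_eq)
  moreover have "(b mod q) * (n mod q) mod q = 1" using b by (simp add: mod_mult_eq mult.commute)
  ultimately show ?thesis
    unfolding units_of_carrier Units_def Zq_def by auto
qed

definition chi_of :: "(nat \<Rightarrow> complex) \<Rightarrow> nat \<Rightarrow> complex" where
  "chi_of F n = (if coprime n q then F (n mod q) else 0)"

lemma chi_of_dirichlet:
  assumes F: "is_char_on U (carrier U) F"
  shows "dirichlet_char q (chi_of F)"
proof -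
  interpret G: comm_group U by (rule U_cg)
  have F1: "F 1 = 1" using F U_one by (simp add: is_char_on_def)
  have Fm: "F (x * y mod q) = F x * F y" if "x \<in> carrier U" "y \<in> carrier U" for x y
    using F that U_mult by (simp add: is_char_on_def)
  have Fnz: "F x \<noteq> 0" if "x \<in> carrier U" for x
  proof
    assume "F x = 0"
    have "F (x \<otimes>\<^bsub>U\<^esub> inv\<^bsub>U\<^esub> x) = F x * F (inv\<^bsub>U\<^esub> x)"
      using F that G.inv_closed[OF that] unfolding is_char_on_def by blast
    then have "F \<one>\<^bsub>U\<^esub> = 0" using \<open>F x = 0\<close> that by simp
    then show False using F by (simp add: is_char_on_def)
  qed
  have "chi_of F 1 = 1" using q2 F1 by (simp add: chi_of_def)
  moreover have "chi_of F (m * n) = chi_of F m * chi_of F n" for m n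
  proof (cases "coprime m q \<and> coprime n q")
    case True
    have "(m * n) mod q = (m mod q) * (n mod q) mod q" by (simp add: mod_mult_eq)
    then show ?thesis using True Fm[OF coprime_U coprime_U] by (simp add: chi_of_def)
  next
    case False then show ?thesis by (auto simp: chi_of_def)
  qed
  moreover have "chi_of F (n + q) = chi_of F n" for n
  proof -
    have "coprime (n + q) q = coprime n q"
      using coprime_mod_left_iff[of q "n + q"] coprime_mod_left_iff[of q n] q0 by simp
    then show ?thesis by (simp add: chi_of_def)
  qed
  moreover have "chi_of F n \<noteq> 0 \<longleftrightarrow> coprime n q" for n
    using Fnz[OF coprime_U] by (auto simp: chi_of_def)
  ultimately show ?thesis using q0 by (simp add: dirichlet_char_def)
qed

lemma exists_sep_char:
  assumes "coprime a q" "a mod q \<noteq> 1"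
  shows "\<exists>ch. dirichlet_char q ch \<and> ch a \<noteq> 1"
proof -
  have "a mod q \<in> carrier U" using coprime_U[OF assms(1)] .
  moreover have "a mod q \<noteq> \<one>\<^bsub>U\<^esub>" using assms(2) U_one by simp
  ultimately obtain F where F: "is_char_on U (carrier U) F" "F (a mod q) \<noteq> 1"
    using char_sep[OF U_cg U_fin] by blast
  then show ?thesis using chi_of_dirichlet[OF F(1)] assms(1) by (intro exI[of _ "chi_of F"]) (simp add: chi_of_def)
qed

end


context qmod begin

definition "Ch = {c. dirichlet_char q c}"
definition "chi0 = (\<lambda>n. if coprime n q then (1::complex) else 0)"

lemma dc1: "c \<in> Ch \<Longrightarrow> c 1 = 1" unfolding Ch_def dirichlet_char_def by blast
lemma dcm: "c \<in> Ch \<Longrightarrow> c (m * n) = c m * c n" unfolding Ch_def dirichlet_char_def by blast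
lemma dcq: "c \<in> Ch \<Longrightarrow> c (n + q) = c n" unfolding Ch_def dirichlet_char_def by blast
lemma dcnz: "c \<in> Ch \<Longrightarrow> c n \<noteq> 0 \<longleftrightarrow> coprime n q" unfolding Ch_def dirichlet_char_def by blast
lemma dc0: "c \<in> Ch \<Longrightarrow> \<not> coprime n q \<Longrightarrow> c n = 0" using dcnz by blast

lemma dc_mod: assumes "c \<in> Ch" shows "c n = c (n mod q)"
proof -
  have "c (r + k * q) = c r" for r k
    by (induction k) (auto simp: dcq[OF assms] add.assoc[symmetric] add.commute[of q] dcq[OF assms, of "r + k * q" for k])
  then show ?thesis by (metis mod_div_mult_eq)
qed

lemma dc_pow: assumes "c \<in> Ch" shows "c (n ^ k) = c n ^ k"
proof (induction k)
  case 0 then show ?case using dc1[OF assms] by simp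
next
  case (Suc k) then show ?case using dcm[OF assms, of n "n ^ k"] by simp
qed

lemma euler_mod: "coprime n q \<Longrightarrow> (n ^ totient q) mod q = 1"
  using euler_theorem[of n q] q2 by (simp add: cong_def)

lemma dc_pow_tot: assumes "c \<in> Ch" "coprime n q" shows "c n ^ totient q = 1"
  using dc_pow[OF assms(1)] dc_mod[OF assms(1), of "n ^ totient q"] euler_mod[OF assms(2)] dc1[OF assms(1)] by simp

lemma tot_pos: "totient q > 0" using q0 by (simp add: totient_gt_0_iff)

lemma dc_norm: assumes "c \<in> Ch" "coprime n q" shows "norm (c n) = 1"
proof -
  have e: "norm (c n) ^ totient q = 1" using dc_pow_tot[OF assms] by (metis norm_one norm_power)
  have x0: "norm (c n) \<ge> 0" by simp
  show ?thesis
  proof (rule ccontr)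
    assume "norm (c n) \<noteq> 1"
    then consider "norm (c n) < 1" | "norm (c n) > 1" by linarith
    then show False
    proof cases
      case 1 then have "norm (c n) ^ totient q < 1" using tot_pos x0 by (simp add: power_less_one_iff)
      then show False using e by simp
    next
      case 2 then have "norm (c n) ^ totient q > 1" using tot_pos by (simp add: one_less_power)
      then show False using e by simp
    qed
  qed
qed

lemma dc_norm_le: "c \<in> Ch \<Longrightarrow> norm (c n) \<le> 1"
  by (cases "coprime n q") (simp_all add: dc_norm dc0)

lemma cnj_mult_self: "c \<in> Ch \<Longrightarrow> cnj (c n) * c n = chi0 n"
proof (cases "coprime n q")
  case True
  assume c: "c \<in> Ch"
  have "cnj (c n) * c n = complex_of_real ((norm (c n))\<^sup>2)" using complex_norm_square[of "c n"] by (simp add: mult.commute)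
  then show ?thesis using dc_norm[OF c True] True by (simp add: chi0_def)
next
  case False
  assume "c \<in> Ch" then show ?thesis using False dc0 by (simp add: chi0_def)
qed

lemma dc_cnj: assumes c: "c \<in> Ch" and b: "coprime b q" "(b * b') mod q = 1"
  shows "cnj (c b) = c b'"
proof -
  have "c b * c b' = 1" using dcm[OF c, of b b'] dc_mod[OF c, of "b * b'"] b dc1[OF c] by simp
  then have "cnj (c b) * (c b * c b') = cnj (c b)" by simp
  then have "chi0 b * c b' = cnj (c b)" using cnj_mult_self[OF c, of b] by (simp add: mult.assoc[symmetric])
  then show ?thesis using b by (simp add: chi0_def)
qed

lemma chi0_in: "chi0 \<in> Ch"
proof -
  have "coprime (n + q) q = coprime n q" for n
    using coprime_mod_left_iff[of q "n + q"] coprime_mod_left_iff[of q n] q0 by simp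
  then show ?thesis using q0 by (auto simp: Ch_def dirichlet_char_def chi0_def)
qed

lemma principal_iff: assumes "c \<in> Ch" shows "principal_char q c \<longleftrightarrow> c = chi0"
proof
  assume "principal_char q c"
  then have "c n = chi0 n" for n using dc0[OF assms, of n] by (auto simp: principal_char_def chi0_def)
  then show "c = chi0" by auto
qed (auto simp: principal_char_def chi0_def)

lemma Ch_mult: assumes "c \<in> Ch" "d \<in> Ch" shows "(\<lambda>n. c n * d n) \<in> Ch"
  using assms q0 by (auto simp: Ch_def dirichlet_char_def)

lemma Ch_cnj: assumes "c \<in> Ch" shows "(\<lambda>n. cnj (c n)) \<in> Ch"
  using assms q0 by (auto simp: Ch_def dirichlet_char_def)

lemma Ch_fin: "finite Ch"
proof -
  define V where "V = insert 0 {z::complex. z ^ totient q = 1}"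
  have fV: "finite V" unfolding V_def using finite_roots_unity[of "totient q"] tot_pos by simp
  have "(\<lambda>c. restrict c {..<q}) ` Ch \<subseteq> PiE {..<q} (\<lambda>_. V)"
  proof
    fix x assume "x \<in> (\<lambda>c. restrict c {..<q}) ` Ch"
    then obtain c where c: "c \<in> Ch" "x = restrict c {..<q}" by blast
    have "c n \<in> V" for n using dc_pow_tot[OF c(1), of n] dc0[OF c(1), of n] by (cases "coprime n q") (auto simp: V_def)
    then show "x \<in> PiE {..<q} (\<lambda>_. V)" using c by auto
  qed
  moreover have "finite (PiE {..<q} (\<lambda>_. V))" using fV by (intro finite_PiE) auto
  ultimately have "finite ((\<lambda>c. restrict c {..<q}) ` Ch)" using finite_subset by blast
  moreover have "inj_on (\<lambda>c. restrict c {..<q}) Ch"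
  proof (rule inj_onI)
    fix c d assume cd: "c \<in> Ch" "d \<in> Ch" "restrict c {..<q} = restrict d {..<q}"
    have "c n = d n" for n
    proof -
      have "n mod q < q" using q0 by simp
      then have "c (n mod q) = d (n mod q)" using cd(3) by (metis lessThan_iff restrict_apply')
      then show ?thesis using dc_mod[OF cd(1)] dc_mod[OF cd(2)] by metis
    qed
    then show "c = d" by auto
  qed
  ultimately show ?thesis using finite_imageD by blast
qed

lemma sum_shift:
  assumes psi: "psi \<in> Ch"
  shows "(\<Sum>c\<in>Ch. c a) = psi a * (\<Sum>c\<in>Ch. c a)"
proof -
  let ?h = "\<lambda>c. (\<lambda>n. psi n * c n)"
  have "bij_betw ?h Ch Ch"
  proof (rule bij_betw_byWitness[where f' = "\<lambda>c. (\<lambda>n. cnj (psi n) * c n)"])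
    show "\<forall>c\<in>Ch. (\<lambda>n. cnj (psi n) * ?h c n) = c"
    proof
      fix c assume c: "c \<in> Ch"
      have "cnj (psi n) * (psi n * c n) = c n" for n
        using cnj_mult_self[OF psi, of n] dc0[OF c, of n]
        by (cases "coprime n q") (simp_all add: mult.assoc[symmetric] chi0_def)
      then show "(\<lambda>n. cnj (psi n) * ?h c n) = c" by auto
    qed
    show "\<forall>c\<in>Ch. ?h (\<lambda>n. cnj (psi n) * c n) = c"
    proof
      fix c assume c: "c \<in> Ch"
      have "psi n * (cnj (psi n) * c n) = c n" for n
        using cnj_mult_self[OF psi, of n] dc0[OF c, of n]
        by (cases "coprime n q") (simp_all add: mult.assoc[symmetric] mult.commute[of "psi n"] chi0_def)
      then show "?h (\<lambda>n. cnj (psi n) * c n) = c" by auto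
    qed
    show "?h ` Ch \<subseteq> Ch" using Ch_mult[OF psi] by auto
    show "(\<lambda>c. (\<lambda>n. cnj (psi n) * c n)) ` Ch \<subseteq> Ch" using Ch_mult[OF Ch_cnj[OF psi]] by auto
  qed
  then have "(\<Sum>c\<in>Ch. (?h c) a) = (\<Sum>c\<in>Ch. c a)" by (rule sum.reindex_bij_betw[where g = "\<lambda>c. c a"])
  then show ?thesis by (simp add: sum_distrib_left)
qed

lemma mod1_coprime: "a mod q = 1 \<Longrightarrow> coprime a q"
  using coprime_mod_left_iff[of q a] q0 by simp

lemma sum_chars: "(\<Sum>c\<in>Ch. c a) = (if a mod q = 1 then of_nat (card Ch) else 0)"
proof (cases "a mod q = 1")
  case True
  then have "c a = 1" if "c \<in> Ch" for c using dc_mod[OF that, of a] dc1[OF that] by simp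
  then have "(\<Sum>c\<in>Ch. c a) = (\<Sum>c\<in>Ch. 1)" by (intro sum.cong) auto
  then show ?thesis using True by simp
next
  case False
  show ?thesis
  proof (cases "coprime a q")
    case True
    obtain psi where "dirichlet_char q psi" "psi a \<noteq> 1" using exists_sep_char[OF True False] by blast
    then have "psi \<in> Ch" "psi a \<noteq> 1" by (auto simp: Ch_def)
    then show ?thesis using sum_shift[of psi a] False
      by (metis mult_cancel_right1)
  next
    case nc: False
    then have "(\<Sum>c\<in>Ch. c a) = (\<Sum>c\<in>Ch. 0)" using dc0 by (intro sum.cong) auto
    then show ?thesis using False by simp
  qed
qed


lemma exists_ne1: assumes "c \<in> Ch" "c \<noteq> chi0" shows "\<exists>b. coprime b q \<and> c b \<noteq> 1"
proof (rule ccontr)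
  assume "\<not> ?thesis"
  then have "c n = chi0 n" for n using dc0[OF assms(1), of n] by (auto simp: chi0_def)
  then show False using assms(2) by auto
qed

lemma mulmod_bij: assumes "coprime b q" shows "bij_betw (\<lambda>a. (a * b) mod q) {..<q} {..<q}"
proof -
  obtain b' where b': "coprime b' q" "(b * b') mod q = 1" using inv_ex[OF assms] by blast
  show ?thesis
  proof (rule bij_betw_byWitness[where f' = "\<lambda>a. (a * b') mod q"])
    show "\<forall>a\<in>{..<q}. ((a * b) mod q * b') mod q = a"
    proof
      fix a :: nat assume "a \<in> {..<q}"
      have "((a * b) mod q * b') mod q = (a * (b * b')) mod q" by (simp add: mod_mult_left_eq mult.assoc)
      also have "\<dots> = (a * ((b * b') mod q)) mod q" by (simp add: mod_mult_right_eq)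
      also have "\<dots> = a" using b' \<open>a \<in> {..<q}\<close> by simp
      finally show "((a * b) mod q * b') mod q = a" .
    qed
    show "\<forall>a\<in>{..<q}. ((a * b') mod q * b) mod q = a"
    proof
      fix a :: nat assume "a \<in> {..<q}"
      have "((a * b') mod q * b) mod q = (a * (b * b')) mod q" by (simp add: mod_mult_left_eq mult.assoc mult.commute[of b'])
      also have "\<dots> = (a * ((b * b') mod q)) mod q" by (simp add: mod_mult_right_eq)
      also have "\<dots> = a" using b' \<open>a \<in> {..<q}\<close> by simp
      finally show "((a * b') mod q * b) mod q = a" .
    qed
  qed (use q0 in auto)
qed

lemma sum_nonprincipal: assumes "c \<in> Ch" "c \<noteq> chi0" shows "(\<Sum>a<q. c a) = 0"
proof -
  obtain b where b: "coprime b q" "c b \<noteq> 1" using exists_ne1[OF assms] by blast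
  have "(\<Sum>a<q. c ((a * b) mod q)) = (\<Sum>a<q. c a)"
    by (rule sum.reindex_bij_betw[OF mulmod_bij[OF b(1)], where g = c])
  moreover have "c ((a * b) mod q) = c a * c b" for a
    using dc_mod[OF assms(1), of "a * b"] dcm[OF assms(1), of a b] by simp
  ultimately have "(\<Sum>a<q. c a) * c b = (\<Sum>a<q. c a)" by (simp add: sum_distrib_right)
  then show ?thesis using b(2) by (metis mult_cancel_left1 mult.commute)
qed

lemma coprime_set: "{a \<in> {..<q}. coprime a q} = totatives q"
proof -
  have h: "coprime x q \<Longrightarrow> x \<noteq> 0 \<and> x \<noteq> q" for x
  proof -
    assume c: "coprime x q"
    have "x \<noteq> 0" proof assume "x = 0" then have "q = 1" using c by simp then show False using q2 by simp qed
    moreover have "x \<noteq> q" proof assume "x = q" then have "q = 1" using c by simp then show False using q2 by simp qed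
    ultimately show ?thesis by simp
  qed
  have "x \<in> {a \<in> {..<q}. coprime a q} \<longleftrightarrow> x \<in> {k \<in> {0<..q}. coprime k q}" for x
    using h[of x] by auto
  then show ?thesis unfolding totatives_def by blast
qed

lemma sum_chi0: "(\<Sum>a<q. chi0 a) = of_nat (totient q)"
proof -
  have "(\<Sum>a<q. chi0 a) = (\<Sum>a\<in>{a \<in> {..<q}. coprime a q}. 1)"
    unfolding chi0_def using sum.inter_filter[of "{..<q}" "\<lambda>_. (1::complex)" "\<lambda>a. coprime a q"] by simp
  also have "\<dots> = of_nat (totient q)" unfolding coprime_set totient_def by simp
  finally show ?thesis .
qed

lemma card_Ch: "card Ch = totient q"
proof -
  have "(\<Sum>a<q. \<Sum>c\<in>Ch. c a) = (\<Sum>a<q. if a = 1 then of_nat (card Ch) else 0)"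
    by (intro sum.cong) (auto simp: sum_chars)
  also have "\<dots> = of_nat (card Ch)" using q2 by simp
  finally have e1: "(\<Sum>a<q. \<Sum>c\<in>Ch. c a) = of_nat (card Ch)" .
  have "(\<Sum>c\<in>Ch. \<Sum>a<q. c a) = (\<Sum>c\<in>Ch. if c = chi0 then of_nat (totient q) else 0)"
    by (intro sum.cong) (auto simp: sum_nonprincipal sum_chi0)
  also have "\<dots> = of_nat (totient q)" using chi0_in Ch_fin by simp
  finally have e2: "(\<Sum>c\<in>Ch. \<Sum>a<q. c a) = of_nat (totient q)" .
  have "(of_nat (card Ch) :: complex) = of_nat (totient q)"
    using e1 e2 sum.swap[where A = "{..<q}" and B = Ch and g = "\<lambda>a c. c a"] by simp
  then show ?thesis using of_nat_eq_iff by blast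
qed

lemma orth: "(\<Sum>c\<in>Ch. c a * cnj (c b)) =
   (if coprime a q \<and> coprime b q \<and> a mod q = b mod q then of_nat (totient q) else 0)"
proof (cases "coprime b q")
  case False
  then have "(\<Sum>c\<in>Ch. c a * cnj (c b)) = (\<Sum>c\<in>Ch. 0)" using dc0 by (intro sum.cong) auto
  then show ?thesis using False by simp
next
  case True
  obtain b' where b': "coprime b' q" "(b * b') mod q = 1" using inv_ex[OF True] by blast
  have "(\<Sum>c\<in>Ch. c a * cnj (c b)) = (\<Sum>c\<in>Ch. c (a * b'))"
    using dc_cnj[OF _ True b'(2)] dcm by (intro sum.cong) auto
  also have "\<dots> = (if (a * b') mod q = 1 then of_nat (card Ch) else 0)" by (rule sum_chars)
  also have "((a * b') mod q = 1) \<longleftrightarrow> coprime a q \<and> a mod q = b mod q"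
  proof
    assume h: "(a * b') mod q = 1"
    then have "coprime (a * b') q" using mod1_coprime by blast
    then have ca: "coprime a q" by simp
    have "[a * b' = 1] (mod q)" using h q2 by (simp add: cong_def)
    then have "[a * b' * b = b] (mod q)" using cong_scalar_right by fastforce
    moreover have "[b * b' = 1] (mod q)" using b' q2 by (simp add: cong_def)
    then have "[a * (b * b') = a] (mod q)" using cong_scalar_left by fastforce
    ultimately have "[a = b] (mod q)" by (metis cong_sym cong_trans mult.assoc mult.commute)
    then show "coprime a q \<and> a mod q = b mod q" using ca by (simp add: cong_def)
  next
    assume h: "coprime a q \<and> a mod q = b mod q"
    then have "(a * b') mod q = (b * b') mod q" by (metis mod_mult_left_eq)
    then show "(a * b') mod q = 1" using b' by simp
  qed
  finally show ?thesis using True card_Ch by simp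
qed

end


lemma r_nonneg:
  assumes cm: "compl_mult r" and np: "\<forall>p. prime p \<longrightarrow> r p \<ge> 0"
  shows "n \<ge> 1 \<Longrightarrow> r n \<ge> 0"
proof (induction n rule: less_induct)
  case (less n)
  show ?case
  proof (cases "n = 1")
    case True then show ?thesis using cm by (simp add: compl_mult_def)
  next
    case False
    then obtain p where p: "prime p" "p dvd n" using prime_factor_nat by blast
    then obtain m where m: "n = p * m" by blast
    have "m \<ge> 1" using m less.prems by (cases m) auto
    moreover have "p > 1" using p prime_gt_1_nat by blast
    ultimately have "m < n" using m by simp
    then have "r m \<ge> 0" using less.IH \<open>m \<ge> 1\<close> by blast
    moreover have "r n = r p * r m" using cm m \<open>m \<ge> 1\<close> \<open>p > 1\<close> by (simp add: compl_mult_def)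
    ultimately show ?thesis using np p by simp
  qed
qed

lemma r_zero:
  assumes cm: "compl_mult r" and n: "n \<ge> 1" and d: "p dvd n" and rp: "r p = 0" and p0: "p > 0"
  shows "r n = 0"
proof -
  obtain m where m: "n = p * m" using d by (elim dvdE)
  have "m > 0" using m n by (cases m) auto
  have "r (p * m) = r p * r m" using cm p0 \<open>m > 0\<close> unfolding compl_mult_def by blast
  then show ?thesis using m rp by simp
qed

lemma r_coprime0:
  assumes cm: "compl_mult r" and h: "\<forall>p. prime p \<longrightarrow> p dvd q \<longrightarrow> r p = 0"
    and n: "n \<ge> 1" "\<not> coprime n q"
  shows "r n = 0"
proof -
  have "gcd n q \<noteq> 1" using n(2) coprime_iff_gcd_eq_1 by blast
  then obtain p where p: "prime p" "p dvd gcd n q" using prime_factor_nat by blast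
  then have pd: "p dvd n" "p dvd q" by auto
  have "r p = 0" using h p(1) pd(2) by blast
  moreover have "p > 0" using p(1) prime_gt_0_nat by blast
  ultimately show ?thesis using r_zero[OF cm n(1) pd(1)] by blast
qed

context qmod begin

definition "ind a b = (if coprime a q \<and> coprime b q \<and> a mod q = b mod q then real (totient q) else 0)"

lemma orth_real: "(\<Sum>c\<in>Ch. c a * cnj (c b)) = complex_of_real (ind a b)"
  unfolding orth ind_def by simp

lemma gen_orth:
  assumes "finite I" "finite J"
  shows "(\<Sum>c\<in>Ch. (\<Sum>i\<in>I. of_real (a i) * c (u i)) * cnj (\<Sum>j\<in>J. of_real (b j) * c (v j))) =
    complex_of_real (\<Sum>i\<in>I. \<Sum>j\<in>J. a i * b j * ind (u i) (v j))"
proof -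
  have e1: "(\<Sum>i\<in>I. of_real (a i) * c (u i)) * cnj (\<Sum>j\<in>J. of_real (b j) * c (v j)) =
     (\<Sum>i\<in>I. \<Sum>j\<in>J. of_real (a i * b j) * (c (u i) * cnj (c (v j))))" for c
    by (simp add: cnj_sum sum_product mult_ac)
  have "(\<Sum>c\<in>Ch. (\<Sum>i\<in>I. of_real (a i) * c (u i)) * cnj (\<Sum>j\<in>J. of_real (b j) * c (v j))) =
     (\<Sum>c\<in>Ch. \<Sum>i\<in>I. \<Sum>j\<in>J. of_real (a i * b j) * (c (u i) * cnj (c (v j))))"
    using e1 by simp
  also have "\<dots> = (\<Sum>i\<in>I. \<Sum>c\<in>Ch. \<Sum>j\<in>J. of_real (a i * b j) * (c (u i) * cnj (c (v j))))"
    by (rule sum.swap)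
  also have "\<dots> = (\<Sum>i\<in>I. \<Sum>j\<in>J. \<Sum>c\<in>Ch. of_real (a i * b j) * (c (u i) * cnj (c (v j))))"
    by (intro sum.cong refl sum.swap)
  also have "\<dots> = (\<Sum>i\<in>I. \<Sum>j\<in>J. of_real (a i * b j) * complex_of_real (ind (u i) (v j)))"
    by (simp add: sum_distrib_left[symmetric] orth_real)
  also have "\<dots> = complex_of_real (\<Sum>i\<in>I. \<Sum>j\<in>J. a i * b j * ind (u i) (v j))"
    by simp
  finally show ?thesis .
qed

lemma ind_nonneg: "ind a b \<ge> 0" by (simp add: ind_def)

lemma ind_small: assumes "1 \<le> a" "a < q" "1 \<le> b" "b < q"
  shows "ind a b = (if a = b \<and> coprime a q then real (totient q) else 0)"
  using assms by (auto simp: ind_def)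


lemma Delta_bdd: "bdd_above ({0} \<union> {norm (\<Sum>n\<in>{1..nat \<lfloor>N\<rfloor>}. chi n) | chi.
                        dirichlet_char q chi \<and> \<not> principal_char q chi})"
proof (rule bdd_aboveI[where M = "real (nat \<lfloor>N\<rfloor>)"])
  fix x assume "x \<in> {0} \<union> {norm (\<Sum>n\<in>{1..nat \<lfloor>N\<rfloor>}. chi n) | chi.
                        dirichlet_char q chi \<and> \<not> principal_char q chi}"
  then consider "x = 0" | chi where "dirichlet_char q chi" "x = norm (\<Sum>n\<in>{1..nat \<lfloor>N\<rfloor>}. chi n)" by blast
  then show "x \<le> real (nat \<lfloor>N\<rfloor>)"
  proof cases
    case 2
    then have c: "chi \<in> Ch" by (simp add: Ch_def)
    have "x \<le> (\<Sum>n\<in>{1..nat \<lfloor>N\<rfloor>}. norm (chi n))" using 2 norm_sum by metis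
    also have "\<dots> \<le> (\<Sum>n\<in>{1..nat \<lfloor>N\<rfloor>}. 1)" using dc_norm_le[OF c] by (intro sum_mono) auto
    finally show ?thesis by simp
  qed simp
qed

lemma Delta_ge0: "Delta N q \<ge> 0"
  unfolding Delta_def by (rule cSup_upper[OF _ Delta_bdd]) simp

lemma Delta_ge: assumes "c \<in> Ch" "c \<noteq> chi0"
  shows "norm (\<Sum>n\<in>{1..nat \<lfloor>N\<rfloor>}. c n) \<le> Delta N q"
proof -
  have "\<not> principal_char q c" using principal_iff assms by blast
  then have "norm (\<Sum>n\<in>{1..nat \<lfloor>N\<rfloor>}. c n) \<in> {0} \<union> {norm (\<Sum>n\<in>{1..nat \<lfloor>N\<rfloor>}. chi n) | chi.
                        dirichlet_char q chi \<and> \<not> principal_char q chi}"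
    using assms(1) by (auto simp: Ch_def)
  then show ?thesis unfolding Delta_def by (rule cSup_upper[OF _ Delta_bdd])
qed


lemma normsq_sum:
  assumes nn: "\<And>n. n \<ge> 1 \<Longrightarrow> r n \<ge> 0"
    and cp: "\<And>n. n \<ge> 1 \<Longrightarrow> \<not> coprime n q \<Longrightarrow> r n = 0"
    and Xq: "X < q"
  shows "(\<Sum>c\<in>Ch. (norm (\<Sum>n\<in>{1..X}. of_real (r n) * c n))\<^sup>2) = real (totient q) * (\<Sum>n\<in>{1..X}. (r n)\<^sup>2)"
proof -
  let ?R = "\<lambda>c. (\<Sum>n\<in>{1..X}. of_real (r n) * c n)"
  have "complex_of_real (\<Sum>c\<in>Ch. (norm (?R c))\<^sup>2) = (\<Sum>c\<in>Ch. ?R c * cnj (?R c))"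
    by (simp only: of_real_sum complex_norm_square)
  also have "\<dots> = complex_of_real (\<Sum>n\<in>{1..X}. \<Sum>m\<in>{1..X}. r n * r m * ind n m)"
    using gen_orth[of "{1..X}" "{1..X}" r "\<lambda>n. n" r "\<lambda>n. n"] by simp
  finally have e: "(\<Sum>c\<in>Ch. (norm (?R c))\<^sup>2) = (\<Sum>n\<in>{1..X}. \<Sum>m\<in>{1..X}. r n * r m * ind n m)"
    using of_real_eq_iff by blast
  have inner: "(\<Sum>m\<in>{1..X}. r n * r m * ind n m) = real (totient q) * (r n)\<^sup>2" if n: "n \<in> {1..X}" for n
  proof -
    have "(\<Sum>m\<in>{1..X}. r n * r m * ind n m) = r n * r n * ind n n + (\<Sum>m\<in>{1..X} - {n}. r n * r m * ind n m)"
      using n by (simp add: sum.remove)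
    also have "(\<Sum>m\<in>{1..X} - {n}. r n * r m * ind n m) = 0"
      using n Xq by (intro sum.neutral) (auto simp: ind_small)
    also have "r n * r n * ind n n = real (totient q) * (r n)\<^sup>2"
      using n Xq cp[of n] by (cases "coprime n q") (auto simp: ind_small power2_eq_square)
    finally show ?thesis by simp
  qed
  show ?thesis using e inner by (simp add: sum_distrib_left)
qed

lemma reson:
  fixes r :: "nat \<Rightarrow> real" and X L Y :: nat
  assumes nn: "\<And>n. n \<ge> 1 \<Longrightarrow> r n \<ge> 0"
    and cp: "\<And>n. n \<ge> 1 \<Longrightarrow> \<not> coprime n q \<Longrightarrow> r n = 0"
    and cm: "compl_mult r"
    and XL: "X * L \<le> totient q"
    and YL: "Y * L \<le> X"
    and LN: "L = nat \<lfloor>N\<rfloor>"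
  shows "(\<Sum>n\<in>{1..Y}. (r n)\<^sup>2) * (\<Sum>k\<in>{1..L}. r k) \<le> (\<Sum>n\<in>{1..X}. (r n)\<^sup>2) * (1 + Delta N q)"
proof (cases "L = 0")
  case True
  have "0 \<le> (\<Sum>n\<in>{1..X}. (r n)\<^sup>2) * (1 + Delta N q)"
    using Delta_ge0[of N] by (intro mult_nonneg_nonneg sum_nonneg) auto
  then show ?thesis using True by simp
next
  case False
  define I where "I = {1..X}"
  define K where "K = {1..L}"
  define P where "P = (\<Sum>n\<in>{1..Y}. (r n)\<^sup>2)"
  define Q where "Q = (\<Sum>n\<in>I. (r n)\<^sup>2)"
  define T where "T = (\<Sum>k\<in>K. r k)"
  define phi where "phi = real (totient q)"
  define R where "R = (\<lambda>c::nat \<Rightarrow> complex. \<Sum>n\<in>I. complex_of_real (r n) * c n)"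
  define S where "S = (\<lambda>c::nat \<Rightarrow> complex. \<Sum>k\<in>K. c k)"
  have L1: "L \<ge> 1" using False by simp
  have tq: "totient q < q" using q2 totient_less by simp
  have Xq: "X < q" using XL L1 tq by (metis le_trans mult_le_cancel1 nat_mult_1_right not_le)
  have YX: "Y \<le> X" using YL L1 by (metis le_trans mult_le_cancel1 nat_mult_1_right)
  have nkq: "n * k < q" if "n \<in> I" "k \<in> K" for n k
  proof -
    have "n * k \<le> X * L" using that by (intro mult_le_mono) (auto simp: I_def K_def)
    then show ?thesis using XL tq by linarith
  qed
  have phi_pos: "phi > 0" unfolding phi_def using tot_pos by simp
  have Q0: "Q \<ge> 0" unfolding Q_def by (intro sum_nonneg) auto
  have T0: "T \<ge> 0" unfolding T_def K_def using nn by (intro sum_nonneg) auto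
  have RS: "R c * S c = (\<Sum>i\<in>I \<times> K. of_real (r (fst i)) * c (fst i * snd i))" if c: "c \<in> Ch" for c
  proof -
    have "R c * S c = (\<Sum>n\<in>I. \<Sum>k\<in>K. of_real (r n) * c n * c k)"
      unfolding R_def S_def by (simp add: sum_product)
    also have "\<dots> = (\<Sum>n\<in>I. \<Sum>k\<in>K. of_real (r n) * c (n * k))"
      using dcm[OF c] by (simp add: mult.assoc)
    also have "\<dots> = (\<Sum>i\<in>I \<times> K. of_real (r (fst i)) * c (fst i * snd i))"
      by (simp add: sum.cartesian_product split_def)
    finally show ?thesis .
  qed
  define Ar where "Ar = (\<Sum>i\<in>I \<times> K. \<Sum>m\<in>I. r (fst i) * r m * ind (fst i * snd i) m)"
  have A: "(\<Sum>c\<in>Ch. R c * S c * cnj (R c)) = complex_of_real Ar"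
  proof -
    have "(\<Sum>c\<in>Ch. R c * S c * cnj (R c)) =
      (\<Sum>c\<in>Ch. (\<Sum>i\<in>I \<times> K. of_real (r (fst i)) * c (fst i * snd i)) * cnj (\<Sum>m\<in>I. of_real (r m) * c m))"
      using RS by (intro sum.cong) (auto simp: R_def)
    also have "\<dots> = complex_of_real Ar" unfolding Ar_def
      by (rule gen_orth) (auto simp: I_def K_def)
    finally show ?thesis .
  qed
  have inner_nn: "(\<Sum>m\<in>I. r (fst i) * r m * ind (fst i * snd i) m) \<ge> 0" if "i \<in> I \<times> K" for i
    using that nn ind_nonneg by (intro sum_nonneg mult_nonneg_nonneg) (auto simp: I_def)
  have inner_lb: "(\<Sum>m\<in>I. r (fst i) * r m * ind (fst i * snd i) m) \<ge> phi * ((r (fst i))\<^sup>2 * r (snd i))"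
    if i: "i \<in> {1..Y} \<times> K" for i
  proof -
    obtain n k where nk: "i = (n, k)" "n \<in> {1..Y}" "k \<in> K" using i by auto
    have nI: "n \<in> I" using nk YX by (auto simp: I_def)
    have "n * k \<le> Y * L" using nk by (intro mult_le_mono) (auto simp: K_def)
    then have mI: "n * k \<in> I" using YL nk by (auto simp: I_def K_def)
    have "r n * r (n * k) * ind (n * k) (n * k) \<le> (\<Sum>m\<in>I. r n * r m * ind (n * k) m)"
      using mI nn ind_nonneg by (intro member_le_sum mult_nonneg_nonneg) (auto simp: I_def)
    moreover have "r n * r (n * k) * ind (n * k) (n * k) = phi * ((r n)\<^sup>2 * r k)"
    proof -
      have rnk: "r (n * k) = r n * r k" using cm nk by (auto simp: compl_mult_def K_def)
      show ?thesis
      proof (cases "coprime (n * k) q")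
        case True
        then show ?thesis using mI nkq[OF nI nk(3)] rnk by (auto simp: ind_small I_def phi_def power2_eq_square)
      next
        case False
        then have "r (n * k) = 0" using cp mI by (auto simp: I_def)
        then show ?thesis using rnk by (auto simp: power2_eq_square)
      qed
    qed
    ultimately show ?thesis using nk by simp
  qed
  have lower: "phi * P * T \<le> Ar"
  proof -
    have PT: "P * T = (\<Sum>n\<in>{1..Y}. \<Sum>k\<in>K. (r n)\<^sup>2 * r k)" unfolding P_def T_def by (rule sum_product)
    have "phi * P * T = (\<Sum>n\<in>{1..Y}. \<Sum>k\<in>K. phi * ((r n)\<^sup>2 * r k))"
      by (simp only: mult.assoc PT sum_distrib_left)
    also have "\<dots> = (\<Sum>i\<in>{1..Y} \<times> K. phi * ((r (fst i))\<^sup>2 * r (snd i)))"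
      by (simp only: sum.cartesian_product split_def)
    also have "\<dots> \<le> (\<Sum>i\<in>{1..Y} \<times> K. \<Sum>m\<in>I. r (fst i) * r m * ind (fst i * snd i) m)"
      using inner_lb by (intro sum_mono) auto
    also have "\<dots> \<le> Ar" unfolding Ar_def
      using inner_nn YX by (intro sum_mono2) (auto simp: I_def K_def)
    finally show ?thesis .
  qed
  define nR where "nR = (\<lambda>c. (norm (R c))\<^sup>2)"
  have nR0: "nR c \<ge> 0" for c by (simp add: nR_def)
  have Ar_le: "Ar \<le> (\<Sum>c\<in>Ch. nR c * norm (S c))"
  proof -
    have "Ar = Re (\<Sum>c\<in>Ch. R c * S c * cnj (R c))" using A by simp
    also have "\<dots> = (\<Sum>c\<in>Ch. nR c * Re (S c))"
    proof -
      have e: "R c * S c * cnj (R c) = S c * complex_of_real (nR c)" for c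
      proof -
        have "R c * cnj (R c) = complex_of_real (nR c)" unfolding nR_def by (rule complex_norm_square[symmetric])
        then show ?thesis by (metis mult.commute mult.left_commute)
      qed
      have "Re (\<Sum>c\<in>Ch. R c * S c * cnj (R c)) = (\<Sum>c\<in>Ch. Re (S c * complex_of_real (nR c)))"
        unfolding e by (simp only: Re_sum)
      also have "\<dots> = (\<Sum>c\<in>Ch. nR c * Re (S c))" by (intro sum.cong) (simp_all add: mult.commute)
      finally show ?thesis .
    qed
    also have "\<dots> \<le> (\<Sum>c\<in>Ch. nR c * norm (S c))"
      using nR0 by (intro sum_mono mult_left_mono) (auto simp: complex_Re_le_cmod)
    finally show ?thesis .
  qed
  have S0: "norm (S chi0) \<le> real L"
  proof -
    have "norm (S chi0) \<le> (\<Sum>k\<in>K. norm (chi0 k))" unfolding S_def by (rule norm_sum)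
    also have "\<dots> \<le> (\<Sum>k\<in>K. 1)" by (intro sum_mono) (auto simp: chi0_def)
    finally show ?thesis by (simp add: K_def)
  qed
  have R0: "nR chi0 \<le> real X * Q"
  proof -
    have "norm (R chi0) \<le> (\<Sum>n\<in>I. norm (of_real (r n) * chi0 n))" unfolding R_def by (rule norm_sum)
    also have "\<dots> \<le> (\<Sum>n\<in>I. r n)" using nn by (intro sum_mono) (auto simp: chi0_def I_def)
    finally have a: "norm (R chi0) \<le> (\<Sum>n\<in>I. r n)" .
    have "nR chi0 \<le> (\<Sum>n\<in>I. r n)\<^sup>2" unfolding nR_def using a by (intro power_mono) auto
    also have "\<dots> \<le> Q * real (card I)" unfolding Q_def by (rule sum_squared_le_sum_of_squares)
    finally show ?thesis by (simp add: I_def mult.commute)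
  qed
  have others: "(\<Sum>c\<in>Ch - {chi0}. nR c * norm (S c)) \<le> Delta N q * (\<Sum>c\<in>Ch. nR c)"
  proof -
    have "(\<Sum>c\<in>Ch - {chi0}. nR c * norm (S c)) \<le> (\<Sum>c\<in>Ch - {chi0}. nR c * Delta N q)"
      using Delta_ge[of _ N] nR0 LN by (intro sum_mono mult_left_mono) (auto simp: S_def K_def)
    also have "\<dots> = Delta N q * (\<Sum>c\<in>Ch - {chi0}. nR c)" by (simp add: sum_distrib_left mult.commute)
    also have "\<dots> \<le> Delta N q * (\<Sum>c\<in>Ch. nR c)"
      using Delta_ge0[of N] nR0 Ch_fin by (intro mult_left_mono sum_mono2) auto
    finally show ?thesis .
  qed
  have sumnR: "(\<Sum>c\<in>Ch. nR c) = phi * Q"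
    unfolding nR_def R_def phi_def Q_def I_def using normsq_sum[OF nn cp Xq] by simp
  have upper: "Ar \<le> phi * Q * (1 + Delta N q)"
  proof -
    have "(\<Sum>c\<in>Ch. nR c * norm (S c)) = nR chi0 * norm (S chi0) + (\<Sum>c\<in>Ch - {chi0}. nR c * norm (S c))"
      using chi0_in Ch_fin by (simp add: sum.remove)
    also have "\<dots> \<le> real X * Q * real L + Delta N q * (phi * Q)"
    proof -
      have "nR chi0 * norm (S chi0) \<le> real X * Q * real L"
        using R0 S0 nR0 Q0 by (intro mult_mono) auto
      moreover have "(\<Sum>c\<in>Ch - {chi0}. nR c * norm (S c)) \<le> Delta N q * (phi * Q)"
        using others sumnR by simp
      ultimately show ?thesis by (rule add_mono)
    qed
    also have "real X * Q * real L \<le> phi * Q"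
    proof -
      have "real X * real L \<le> phi" using XL unfolding phi_def by (metis of_nat_le_iff of_nat_mult)
      then show ?thesis using Q0 by (metis mult.commute mult.left_commute mult_right_mono)
    qed
    finally show ?thesis using Ar_le by (simp add: algebra_simps)
  qed
  have "phi * (P * T) \<le> phi * (Q * (1 + Delta N q))" using lower upper by (simp add: mult_ac)
  then have "P * T \<le> Q * (1 + Delta N q)" using phi_pos by simp
  then show ?thesis unfolding P_def Q_def T_def I_def K_def .
qed

end


lemma part1_core:
  fixes q :: nat and N :: real and r :: "nat \<Rightarrow> real"
  assumes q0: "q > 0" and N1: "1 \<le> N" and Nq: "N < sqrt (real q)" and cm: "compl_mult r"
    and nn: "\<And>n. n \<ge> 1 \<Longrightarrow> r n \<ge> 0"
    and cp: "\<And>n. n \<ge> 1 \<Longrightarrow> \<not> coprime n q \<Longrightarrow> r n = 0"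
  shows "Delta N q \<ge> - 1 + invB r ((real (totient q) / N) / N) * (\<Sum>n\<in>{1..nat \<lfloor>N\<rfloor>}. r n)"
proof -
  have "sqrt (real q) > 1" using N1 Nq by linarith
  then have "real q > 1" using real_sqrt_gt_1_iff by blast
  then have q2: "q \<ge> 2" by simp
  interpret qmod q by unfold_locales (rule q2)
  define L where "L = nat \<lfloor>N\<rfloor>"
  define x where "x = real (totient q) / N"
  define X where "X = nat \<lfloor>x\<rfloor>"
  define y where "y = x / N"
  define Y where "Y = nat \<lfloor>y\<rfloor>"
  have Npos: "N > 0" using N1 by simp
  have x0: "x \<ge> 0" unfolding x_def using Npos by simp
  have y0: "y \<ge> 0" unfolding y_def using x0 Npos by simp
  have Lr: "real L \<le> N" "real L \<ge> 1" unfolding L_def using N1 by (auto simp: le_nat_floor)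
  have Xr: "real X \<le> x" unfolding X_def using x0 by simp
  have Yr: "real Y \<le> y" unfolding Y_def using y0 by simp
  have XL: "X * L \<le> totient q"
  proof -
    have "real X * real L \<le> x * N" using Xr Lr x0 by (intro mult_mono) auto
    also have "\<dots> = real (totient q)" unfolding x_def using Npos by simp
    finally show ?thesis by (metis of_nat_le_iff of_nat_mult)
  qed
  have YL: "Y * L \<le> X"
  proof -
    have "real Y * real L \<le> y * N" using Yr Lr y0 by (intro mult_mono) auto
    also have "\<dots> = x" unfolding y_def using Npos by simp
    finally have "real (Y * L) \<le> x" by simp
    then have "int (Y * L) \<le> \<lfloor>x\<rfloor>" by (simp add: le_floor_iff)
    then show ?thesis unfolding X_def by linarith
  qed
  define P where "P = (\<Sum>n\<in>{1..Y}. (r n)\<^sup>2)"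
  define Q where "Q = (\<Sum>n\<in>{1..X}. (r n)\<^sup>2)"
  define T where "T = (\<Sum>k\<in>{1..L}. r k)"
  have main: "P * T \<le> Q * (1 + Delta N q)"
    using reson[OF nn cp cm XL YL L_def] unfolding P_def Q_def T_def by simp
  have T0: "T \<ge> 0" unfolding T_def using nn by (intro sum_nonneg) auto
  have P0: "P \<ge> 0" unfolding P_def by (intro sum_nonneg) auto
  have D0: "Delta N q \<ge> 0" by (rule Delta_ge0)
  have goal: "invB r y * T \<le> 1 + Delta N q"
  proof (cases "summable (\<lambda>n. r (Suc n) ^ 2) \<and> Y \<ge> 1")
    case False
    have "invB r y = 0"
    proof (cases "summable (\<lambda>n. r (Suc n) ^ 2)")
      case ns: False
      then show ?thesis by (simp add: invB_def)
    next
      case True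
      then have "Y = 0" using False by simp
      then show ?thesis unfolding invB_def Y_def by simp
    qed
    then show ?thesis using D0 by simp
  next
    case True
    then have sm: "summable (\<lambda>n. r (Suc n) ^ 2)" and Y1: "Y \<ge> 1" by auto
    define Ss where "Ss = (\<Sum>n. r (Suc n) ^ 2)"
    have X1: "X \<ge> 1" using YL Y1 Lr(2) by (metis le_trans mult_le_mono nat_mult_1 of_nat_1 of_nat_le_iff)
    have Q1: "Q \<ge> 1"
    proof -
      have "(r 1)\<^sup>2 \<le> Q" unfolding Q_def using X1 by (intro member_le_sum) auto
      then show ?thesis using cm by (simp add: compl_mult_def)
    qed
    have QS: "Q \<le> Ss"
    proof -
      have "Q = (\<Sum>k<X. (r (Suc k))\<^sup>2)" unfolding Q_def using sum.atLeast1_atMost_eq[of "\<lambda>n. (r n)\<^sup>2" X] by simp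
      also have "\<dots> \<le> Ss" unfolding Ss_def by (rule sum_le_suminf[OF sm]) auto
      finally show ?thesis .
    qed
    have iv: "invB r y = P / Ss" unfolding invB_def P_def Ss_def Y_def using sm by simp
    have "invB r y * T = P * T / Ss" using iv by simp
    also have "\<dots> \<le> P * T / Q" using QS Q1 P0 T0 by (intro divide_left_mono mult_nonneg_nonneg) auto
    also have "\<dots> \<le> 1 + Delta N q" using main Q1 by (simp add: divide_le_eq mult.commute)
    finally show ?thesis .
  qed
  then show ?thesis unfolding y_def x_def T_def L_def by simp
qed



definition sig :: "(nat \<Rightarrow> nat) \<Rightarrow> nat \<Rightarrow> nat" where
  "sig ff n = prod_mset (image_mset ff (prime_factorization n))"

locale invol = fixes ff :: "nat \<Rightarrow> nat"
  assumes pp: "\<And>p. prime p \<Longrightarrow> prime (ff p)"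
    and pinv: "\<And>p. prime p \<Longrightarrow> ff (ff p) = p"
begin

lemma img_primes: "p \<in># image_mset ff (prime_factorization n) \<Longrightarrow> prime p"
  using pp by (auto simp: in_prime_factors_iff)

lemma sig_pos: "sig ff n > 0"
proof -
  have "0 \<notin># image_mset ff (prime_factorization n)" using img_primes by (metis not_prime_0)
  then show ?thesis unfolding sig_def by (metis prod_mset_zero_iff gr0I)
qed

lemma pf_sig: "prime_factorization (sig ff n) = image_mset ff (prime_factorization n)"
  unfolding sig_def by (rule prime_factorization_prod_mset_primes) (rule img_primes)

lemma sig_sig: assumes "n > 0" shows "sig ff (sig ff n) = n"
proof -
  have "image_mset (\<lambda>x. ff (ff x)) (prime_factorization n) = image_mset (\<lambda>x. x) (prime_factorization n)"
    by (rule image_mset_cong) (use pinv in \<open>auto simp: in_prime_factors_iff\<close>)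
  then have "image_mset ff (image_mset ff (prime_factorization n)) = prime_factorization n"
    by (simp add: multiset.map_comp o_def)
  then show ?thesis using assms unfolding sig_def[of ff "sig ff n"] pf_sig by (simp add: prod_mset_prime_factorization_nat)
qed

lemma sig_mult: assumes "m > 0" "n > 0" shows "sig ff (m * n) = sig ff m * sig ff n"
  using assms unfolding sig_def by (simp add: prime_factorization_mult)

lemma sig_1: "sig ff 1 = 1" unfolding sig_def by simp

lemma sig_prime: "prime p \<Longrightarrow> sig ff p = ff p"
  unfolding sig_def by (simp add: prime_factorization_prime)

lemma sig_inj: "inj_on (sig ff) {1..}"
  by (rule inj_on_inverseI[where g = "sig ff"]) (auto simp: sig_sig)

lemma prod_mset_img_le: "(\<And>x. x \<in># M \<Longrightarrow> f x \<le> x) \<Longrightarrow> prod_mset (image_mset f M) \<le> prod_mset (M :: nat multiset)"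
proof (induction M)
  case empty then show ?case by simp
next
  case (add x M)
  then have "prod_mset (image_mset f M) \<le> prod_mset M" "f x \<le> x" by auto
  then show ?case by (simp add: mult_le_mono)
qed

lemma sig_le: assumes "n > 0" "\<And>p. p \<in> prime_factors n \<Longrightarrow> ff p \<le> p" shows "sig ff n \<le> n"
proof -
  have "sig ff n \<le> prod_mset (prime_factorization n)" unfolding sig_def
    by (rule prod_mset_img_le) (use assms(2) in auto)
  then show ?thesis using assms(1) by (simp add: prod_mset_prime_factorization_nat)
qed

end


lemma Mq_prop: assumes "q > 0" shows "(\<Sum>p\<in>{p. prime p \<and> p \<le> Mq q}. ln (real p)) > ln (real q)"
proof -
  obtain p0 where p0: "prime p0" "q < p0" using bigger_prime by blast
  have "ln (real q) < ln (real p0)" using p0 assms by simp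
  also have "\<dots> \<le> (\<Sum>p\<in>{p. prime p \<and> p \<le> p0}. ln (real p))"
  proof (rule member_le_sum)
    show "p0 \<in> {p. prime p \<and> p \<le> p0}" using p0 by simp
    show "finite {p. prime p \<and> p \<le> p0}" by simp
    show "\<And>x. x \<in> {p. prime p \<and> p \<le> p0} - {p0} \<Longrightarrow> 0 \<le> ln (real x)"
      using prime_gt_0_nat by (auto simp: ln_ge_zero_iff) (metis One_nat_def Suc_leI of_nat_1 of_nat_le_iff prime_gt_0_nat)
  qed
  finally have "\<exists>M. (\<Sum>p\<in>{p. prime p \<and> p \<le> M}. ln (real p)) > ln (real q)" by blast
  then show ?thesis unfolding Mq_def by (rule LeastI_ex)
qed

lemma prod_PM: assumes "q > 0" shows "(\<Prod>p\<in>{p. prime p \<and> p \<le> Mq q}. p) > q"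
proof -
  let ?PM = "{p. prime p \<and> p \<le> Mq q}"
  define P where "P = (\<Prod>p\<in>?PM. p)"
  have fin: "finite ?PM" by simp
  have "ln (real P) = (\<Sum>p\<in>?PM. ln (real p))"
    unfolding P_def of_nat_prod using fin by (subst ln_prod) (auto dest: prime_gt_0_nat)
  then have lnlt: "ln (real q) < ln (real P)" using Mq_prop[OF assms] by simp
  have P0: "P > 0" unfolding P_def using fin by (intro prod_pos) (auto simp: prime_gt_0_nat)
  have "real q < real P" using lnlt assms P0 ln_less_cancel_iff[of "real q" "real P"] by simp
  then have "q < P" by (simp only: of_nat_less_iff)
  then show ?thesis unfolding P_def .
qed

lemma prod_pf_dvd: fixes q :: nat assumes "q > 0" shows "(\<Prod>p\<in>prime_factors q. p) dvd q"
proof -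
  have "(\<Prod>p\<in>prime_factors q. p) dvd (\<Prod>p\<in>prime_factors q. p ^ multiplicity p q)"
  proof (rule prod_dvd_prod)
    fix p assume "p \<in> prime_factors q"
    then have "multiplicity p q > 0" by (simp add: prime_factors_multiplicity)
    then show "p dvd p ^ multiplicity p q" by (simp add: dvd_power)
  qed
  then show ?thesis using prime_factorization_nat[OF assms] by simp
qed

lemma card_BA:
  assumes q0: "q > 0"
  defines "A \<equiv> {p. prime p \<and> p \<le> Mq q \<and> \<not> p dvd q}"
    and "B \<equiv> {p. prime p \<and> Mq q < p \<and> p dvd q}"
  shows "card B \<le> card A"
proof (rule ccontr)
  assume "\<not> card B \<le> card A"
  then have lt: "card A \<le> card B" by simp
  define PM where "PM = {p. prime p \<and> p \<le> Mq q}"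
  define Pq where "Pq = prime_factors q"
  have fPM: "finite PM" unfolding PM_def by simp
  have fA: "finite A" unfolding A_def by simp
  have BPq: "B \<subseteq> Pq" unfolding B_def Pq_def using q0 by (auto simp: in_prime_factors_iff)
  have fB: "finite B" using BPq Pq_def finite_subset by blast
  obtain h where h: "h ` A \<subseteq> B" "inj_on h A" using card_le_inj[OF fA fB lt] by blast
  have "(\<Prod>a\<in>A. a) \<le> (\<Prod>a\<in>A. h a)"
  proof (rule prod_mono)
    fix a assume a: "a \<in> A"
    then have "h a \<in> B" using h by auto
    then show "0 \<le> a \<and> a \<le> h a" using a unfolding A_def B_def by auto
  qed
  also have "\<dots> = (\<Prod>b\<in>h ` A. b)" using h(2) by (simp add: prod.reindex)
  also have "\<dots> \<le> (\<Prod>b\<in>B. b)"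
  proof (rule dvd_imp_le)
    show "(\<Prod>b\<in>h ` A. b) dvd (\<Prod>b\<in>B. b)" by (rule prod_dvd_prod_subset[OF fB h(1)])
    show "0 < (\<Prod>b\<in>B. b)" using fB by (auto simp: B_def prime_gt_0_nat)
  qed
  finally have AB: "(\<Prod>a\<in>A. a) \<le> (\<Prod>b\<in>B. b)" .
  have PMsplit: "PM = (PM \<inter> Pq) \<union> A" unfolding PM_def Pq_def A_def using q0 by (auto simp: in_prime_factors_iff)
  have "(\<Prod>p\<in>PM. p) = (\<Prod>p\<in>PM \<inter> Pq. p) * (\<Prod>p\<in>A. p)"
    by (subst PMsplit, rule prod.union_disjoint) (use fPM fA in \<open>auto simp: A_def Pq_def in_prime_factors_iff\<close>)
  also have "\<dots> \<le> (\<Prod>p\<in>PM \<inter> Pq. p) * (\<Prod>p\<in>B. p)" using AB by simp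
  also have "\<dots> = (\<Prod>p\<in>(PM \<inter> Pq) \<union> B. p)"
    by (rule prod.union_disjoint[symmetric]) (use fPM fB in \<open>auto simp: PM_def B_def\<close>)
  also have "\<dots> \<le> (\<Prod>p\<in>Pq. p)"
  proof (rule dvd_imp_le)
    show "(\<Prod>p\<in>(PM \<inter> Pq) \<union> B. p) dvd (\<Prod>p\<in>Pq. p)" using BPq by (intro prod_dvd_prod_subset) (auto simp: Pq_def)
    show "0 < (\<Prod>p\<in>Pq. p)" by (auto simp: Pq_def prime_gt_0_nat in_prime_factors_iff)
  qed
  also have "\<dots> \<le> q" using prod_pf_dvd[OF q0] q0 unfolding Pq_def by (rule dvd_imp_le)
  finally have "(\<Prod>p\<in>PM. p) \<le> q" .
  then show False using prod_PM[OF q0] unfolding PM_def by simp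
qed


locale cmp = invol ff for ff +
  fixes r :: "nat \<Rightarrow> real" and M :: nat
  assumes cm: "compl_mult r" and rp: "\<And>p. prime p \<Longrightarrow> r p \<ge> 0"
    and rM: "\<And>p. prime p \<Longrightarrow> p \<le> M \<Longrightarrow> r p = 0"
    and ffle: "\<And>p. prime p \<Longrightarrow> M < p \<Longrightarrow> ff p \<le> p"
begin

definition "r2 n = r (sig ff n)"

lemma nn: "n \<ge> 1 \<Longrightarrow> r n \<ge> 0" using r_nonneg[OF cm] rp by blast

lemma cm2: "compl_mult r2"
proof -
  have "r2 1 = 1" using cm sig_1 by (simp add: r2_def compl_mult_def)
  moreover have "r2 (m * n) = r2 m * r2 n" if "m > 0" "n > 0" for m n
    using that sig_mult sig_pos cm by (simp add: r2_def compl_mult_def)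
  ultimately show ?thesis by (simp add: compl_mult_def)
qed

lemma rp2: "prime p \<Longrightarrow> r2 p \<ge> 0" using rp pp sig_prime by (simp add: r2_def)

lemma nn2: "n \<ge> 1 \<Longrightarrow> r2 n \<ge> 0" using r_nonneg[OF cm2] rp2 by blast

lemma supp: assumes "n \<ge> 1" "r n \<noteq> 0" "p \<in> prime_factors n" shows "M < p"
proof (rule ccontr)
  assume "\<not> M < p"
  then have "r p = 0" using rM assms(3) by (auto simp: in_prime_factors_iff)
  moreover have "p dvd n" "p > 0" using assms(3) by (auto simp: in_prime_factors_iff prime_gt_0_nat)
  ultimately have "r n = 0" using r_zero[OF cm assms(1)] by blast
  then show False using assms(2) by simp
qed

lemma sig_le_n: "n \<ge> 1 \<Longrightarrow> r n \<noteq> 0 \<Longrightarrow> sig ff n \<le> n"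
  using sig_le[of n] supp ffle by (auto simp: in_prime_factors_iff)

lemma r2sig: "n \<ge> 1 \<Longrightarrow> r2 (sig ff n) = r n" using sig_sig by (simp add: r2_def)

lemma cmp_sum:
  assumes h0: "h 0 = 0" and hnn: "\<And>x. x \<ge> 0 \<Longrightarrow> h x \<ge> (0::real)"
  shows "(\<Sum>n\<in>{1..K}. h (r n)) \<le> (\<Sum>n\<in>{1..K}. h (r2 n))"
proof -
  define Z where "Z = {n \<in> {1..K}. r n \<noteq> 0}"
  have "(\<Sum>n\<in>{1..K}. h (r n)) = (\<Sum>n\<in>Z. h (r n))"
    by (rule sum.mono_neutral_cong_right) (auto simp: Z_def h0)
  also have "\<dots> = (\<Sum>n\<in>Z. h (r2 (sig ff n)))" by (intro sum.cong) (auto simp: Z_def r2sig)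
  also have "\<dots> = (\<Sum>m\<in>sig ff ` Z. h (r2 m))"
  proof -
    have "inj_on (sig ff) Z" using sig_inj by (rule inj_on_subset) (auto simp: Z_def)
    then show ?thesis by (simp add: sum.reindex)
  qed
  also have "\<dots> \<le> (\<Sum>m\<in>{1..K}. h (r2 m))"
  proof (rule sum_mono2)
    show "sig ff ` Z \<subseteq> {1..K}"
    proof
      fix m assume "m \<in> sig ff ` Z"
      then obtain n where n: "n \<in> Z" "m = sig ff n" by blast
      have "m \<le> n" using n sig_le_n by (auto simp: Z_def)
      moreover have "m \<ge> 1" using n sig_pos by (simp add: Suc_le_eq)
      ultimately show "m \<in> {1..K}" using n by (auto simp: Z_def)
    qed
    show "\<And>b. b \<in> {1..K} - sig ff ` Z \<Longrightarrow> 0 \<le> h (r2 b)" using hnn nn2 by auto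
  qed simp
  finally show ?thesis .
qed

lemma finsum_le:
  assumes sm: "summable (\<lambda>n. r (Suc n) ^ 2)" and F: "finite F" "F \<subseteq> {1..}"
  shows "(\<Sum>n\<in>F. r n ^ 2) \<le> (\<Sum>n. r (Suc n) ^ 2)"
proof -
  have inj: "inj_on (\<lambda>n. n - 1) F"
  proof (rule inj_onI)
    fix x y assume "x \<in> F" "y \<in> F" "x - 1 = y - 1"
    moreover have "x \<ge> 1" "y \<ge> 1" using F(2) \<open>x \<in> F\<close> \<open>y \<in> F\<close> by auto
    ultimately show "x = y" by linarith
  qed
  have "(\<Sum>n\<in>F. r n ^ 2) = (\<Sum>k\<in>(\<lambda>n. n - 1) ` F. r (Suc k) ^ 2)"
    using F(2) by (subst sum.reindex[OF inj]) (auto intro!: sum.cong simp: Suc_diff_1)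
  also have "\<dots> \<le> (\<Sum>n. r (Suc n) ^ 2)" using F(1) by (intro sum_le_suminf[OF sm]) auto
  finally show ?thesis .
qed

lemma summ2:
  assumes sm: "summable (\<lambda>n. r (Suc n) ^ 2)"
  shows "summable (\<lambda>n. r2 (Suc n) ^ 2) \<and> (\<Sum>n. r2 (Suc n) ^ 2) \<le> (\<Sum>n. r (Suc n) ^ 2)"
proof -
  have bd: "(\<Sum>k<K. r2 (Suc k) ^ 2) \<le> (\<Sum>n. r (Suc n) ^ 2)" for K
  proof -
    have "(\<Sum>k<K. r2 (Suc k) ^ 2) = (\<Sum>m\<in>{1..K}. r (sig ff m) ^ 2)"
      using sum.atLeast1_atMost_eq[of "\<lambda>m. r (sig ff m) ^ 2" K] by (simp add: r2_def)
    also have "\<dots> = (\<Sum>n\<in>sig ff ` {1..K}. r n ^ 2)"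
    proof -
      have "inj_on (sig ff) {1..K}" using sig_inj by (rule inj_on_subset) auto
      then show ?thesis by (simp add: sum.reindex)
    qed
    also have "\<dots> \<le> (\<Sum>n. r (Suc n) ^ 2)"
      using sig_pos by (intro finsum_le[OF sm]) (auto simp: Suc_le_eq)
    finally show ?thesis .
  qed
  have s2: "summable (\<lambda>n. r2 (Suc n) ^ 2)" by (rule summableI_nonneg_bounded[OF _ bd]) simp
  then show ?thesis using suminf_le_const[OF s2 bd] by simp
qed

lemma invB_cmp: "invB r y * (\<Sum>n\<in>{1..L}. r n) \<le> invB r2 y * (\<Sum>n\<in>{1..L}. r2 n)"
proof -
  define P where "P = (\<Sum>n\<in>{1..nat \<lfloor>y\<rfloor>}. r n ^ 2)"
  define P2 where "P2 = (\<Sum>n\<in>{1..nat \<lfloor>y\<rfloor>}. r2 n ^ 2)"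
  have PP: "P \<le> P2" unfolding P_def P2_def by (rule cmp_sum) auto
  have P0: "P \<ge> 0" unfolding P_def by (intro sum_nonneg) auto
  have TT: "(\<Sum>n\<in>{1..L}. r n) \<le> (\<Sum>n\<in>{1..L}. r2 n)" by (rule cmp_sum) auto
  have T0: "(\<Sum>n\<in>{1..L}. r n) \<ge> 0" using nn by (intro sum_nonneg) auto
  have iv2: "invB r2 y \<ge> 0"
    unfolding invB_def by (auto intro!: divide_nonneg_nonneg sum_nonneg suminf_nonneg)
  show ?thesis
  proof (cases "summable (\<lambda>n. r (Suc n) ^ 2)")
    case False
    then have "invB r y = 0" by (simp add: invB_def)
    moreover have "invB r2 y * (\<Sum>n\<in>{1..L}. r2 n) \<ge> 0" using iv2 T0 TT by simp
    ultimately show ?thesis by simp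
  next
    case True
    define Ss where "Ss = (\<Sum>n. r (Suc n) ^ 2)"
    define Ss2 where "Ss2 = (\<Sum>n. r2 (Suc n) ^ 2)"
    have s2: "summable (\<lambda>n. r2 (Suc n) ^ 2)" "Ss2 \<le> Ss" using summ2[OF True] by (auto simp: Ss_def Ss2_def)
    have "r2 (Suc 0) ^ 2 \<le> Ss2" unfolding Ss2_def using sum_le_suminf[OF s2(1), of "{0}"] by simp
    then have Ss21: "Ss2 \<ge> 1" using cm2 by (simp add: compl_mult_def)
    have "invB r y = P / Ss" using True by (simp add: invB_def P_def Ss_def)
    also have "\<dots> \<le> P / Ss2" using P0 Ss21 s2(2) by (intro divide_left_mono) auto
    also have "\<dots> \<le> P2 / Ss2" using PP Ss21 by (intro divide_right_mono) auto
    also have "\<dots> = invB r2 y" using s2(1) by (simp add: invB_def P2_def Ss2_def)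
    finally have "invB r y \<le> invB r2 y" .
    then show ?thesis using TT T0 iv2 by (intro mult_mono) auto
  qed
qed

end



lemma part2_core:
  fixes q :: nat and N :: real and r :: "nat \<Rightarrow> real"
  assumes q0: "q > 0" and N1: "1 \<le> N" and Nq: "N < sqrt (real q)" and cm: "compl_mult r"
    and rp: "\<forall>p. prime p \<longrightarrow> r p \<ge> 0" and rM: "\<forall>p. prime p \<longrightarrow> p \<le> Mq q \<longrightarrow> r p = 0"
  shows "Delta N q \<ge> - 1 + invB r ((real (totient q) / N) / N) * (\<Sum>n\<in>{1..nat \<lfloor>N\<rfloor>}. r n)"
proof -
  define M where "M = Mq q"
  define A where "A = {p. prime p \<and> p \<le> M \<and> \<not> p dvd q}"
  define B where "B = {p. prime p \<and> M < p \<and> p dvd q}"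
  have fA: "finite A" unfolding A_def by simp
  have "B \<subseteq> {..q}" unfolding B_def using q0 by (auto dest: dvd_imp_le)
  then have fB: "finite B" using finite_subset by blast
  have cBA: "card B \<le> card A" using card_BA[OF q0] unfolding A_def B_def M_def .
  obtain g where g: "g ` B \<subseteq> A" "inj_on g B" using card_le_inj[OF fB fA cBA] by blast
  have AB: "p \<in> A \<Longrightarrow> p \<notin> B" for p by (auto simp: A_def B_def)
  define ff where "ff p = (if p \<in> B then g p else if p \<in> g ` B then the_inv_into B g p else p)" for p
  have ffB: "p \<in> B \<Longrightarrow> ff p = g p" for p by (simp add: ff_def)
  have ffgB: "p \<in> g ` B \<Longrightarrow> ff p = the_inv_into B g p" for p using g AB by (auto simp: ff_def)
  have ffo: "p \<notin> B \<Longrightarrow> p \<notin> g ` B \<Longrightarrow> ff p = p" for p by (simp add: ff_def)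
  have invB_in: "p \<in> g ` B \<Longrightarrow> the_inv_into B g p \<in> B" for p using g(2) by (rule the_inv_into_into) auto
  interpret invol ff
  proof
    fix p :: nat assume p: "prime p"
    show "prime (ff p)"
    proof (cases "p \<in> B")
      case True then show ?thesis using g ffB by (auto simp: A_def)
    next
      case False
      show ?thesis
      proof (cases "p \<in> g ` B")
        case True then show ?thesis using ffgB invB_in by (auto simp: B_def)
      next
        case False then show ?thesis using \<open>p \<notin> B\<close> ffo p by simp
      qed
    qed
    show "ff (ff p) = p"
    proof (cases "p \<in> B")
      case True
      then have "g p \<in> g ` B" "g p \<notin> B" using g AB by auto
      then show ?thesis using True ffB ffgB the_inv_into_f_f[OF g(2)] by simp
    next
      case nB: False
      show ?thesis
      proof (cases "p \<in> g ` B")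
        case True
        then obtain b where b: "b \<in> B" "p = g b" by blast
        then show ?thesis using ffgB ffB the_inv_into_f_f[OF g(2) b(1)] by simp
      next
        case False then show ?thesis using nB ffo by simp
      qed
    qed
  qed
  have ffle: "ff p \<le> p" if "prime p" "M < p" for p
  proof (cases "p \<in> B")
    case True
    then have "g p \<in> A" using g by auto
    then show ?thesis using True ffB that by (auto simp: A_def)
  next
    case False
    have "p \<notin> g ` B" using g that by (auto simp: A_def)
    then show ?thesis using False ffo by simp
  qed
  interpret C: cmp ff r M
    by unfold_locales (use cm rp rM ffle in \<open>auto simp: M_def\<close>)
  have rq2: "C.r2 p = 0" if p: "prime p" "p dvd q" for p
  proof (cases "p \<in> B")
    case True
    then have "g p \<in> A" using g by auto
    then have "r (g p) = 0" using rM by (auto simp: A_def M_def)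
    then show ?thesis using True ffB p sig_prime by (simp add: C.r2_def)
  next
    case False
    then have pM: "p \<le> M" using p by (auto simp: B_def)
    have "p \<notin> g ` B" using g p by (auto simp: A_def)
    then have "ff p = p" using False ffo by simp
    then show ?thesis using p pM rM sig_prime by (simp add: C.r2_def M_def)
  qed
  have nn2: "\<And>n. n \<ge> 1 \<Longrightarrow> C.r2 n \<ge> 0" by (rule C.nn2)
  have cp2: "\<And>n. n \<ge> 1 \<Longrightarrow> \<not> coprime n q \<Longrightarrow> C.r2 n = 0"
    using r_coprime0[OF C.cm2] rq2 by blast
  have "Delta N q \<ge> - 1 + invB C.r2 ((real (totient q) / N) / N) * (\<Sum>n\<in>{1..nat \<lfloor>N\<rfloor>}. C.r2 n)"
    by (rule part1_core[OF q0 N1 Nq C.cm2 nn2 cp2])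
  moreover have "invB r ((real (totient q) / N) / N) * (\<Sum>n\<in>{1..nat \<lfloor>N\<rfloor>}. r n)
    \<le> invB C.r2 ((real (totient q) / N) / N) * (\<Sum>n\<in>{1..nat \<lfloor>N\<rfloor>}. C.r2 n)"
    by (rule C.invB_cmp)
  ultimately show ?thesis by linarith
qed

theorem mainTheorem6:
  "\<exists>C::real.
     (\<forall>(q::nat) (N::real) (r::nat \<Rightarrow> real).
        q > 0 \<longrightarrow> 1 \<le> N \<longrightarrow> N < sqrt (real q) \<longrightarrow> compl_mult r \<longrightarrow>
        (\<forall>p. prime p \<longrightarrow> r p \<ge> 0) \<longrightarrow> (\<forall>p. prime p \<longrightarrow> p dvd q \<longrightarrow> r p = 0) \<longrightarrow>
        Delta N q \<ge> - C + invB r ((real (totient q) / N) / N) * (\<Sum>n\<in>{1..nat \<lfloor>N\<rfloor>}. r n))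
   \<and> (\<forall>(q::nat) (N::real) (r::nat \<Rightarrow> real).
        q > 0 \<longrightarrow> 1 \<le> N \<longrightarrow> N < sqrt (real q) \<longrightarrow> compl_mult r \<longrightarrow>
        (\<forall>p. prime p \<longrightarrow> r p \<ge> 0) \<longrightarrow> (\<forall>p. prime p \<longrightarrow> p \<le> Mq q \<longrightarrow> r p = 0) \<longrightarrow>
        Delta N q \<ge> - C + invB r ((real (totient q) / N) / N) * (\<Sum>n\<in>{1..nat \<lfloor>N\<rfloor>}. r n))"
proof (rule exI[of _ 1], intro conjI allI impI)
  fix q :: nat and N :: real and r :: "nat \<Rightarrow> real"
  assume h: "q > 0" "1 \<le> N" "N < sqrt (real q)" "compl_mult r" "\<forall>p. prime p \<longrightarrow> r p \<ge> 0"
    "\<forall>p. prime p \<longrightarrow> p dvd q \<longrightarrow> r p = 0"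
  show "Delta N q \<ge> - 1 + invB r ((real (totient q) / N) / N) * (\<Sum>n\<in>{1..nat \<lfloor>N\<rfloor>}. r n)"
  proof (rule part1_core[OF h(1-4)])
    show "\<And>n. n \<ge> 1 \<Longrightarrow> r n \<ge> 0" using r_nonneg[OF h(4)] h(5) by blast
    show "\<And>n. n \<ge> 1 \<Longrightarrow> \<not> coprime n q \<Longrightarrow> r n = 0" using r_coprime0[OF h(4) h(6)] by blast
  qed
next
  fix q :: nat and N :: real and r :: "nat \<Rightarrow> real"
  assume h: "q > 0" "1 \<le> N" "N < sqrt (real q)" "compl_mult r" "\<forall>p. prime p \<longrightarrow> r p \<ge> 0"
    "\<forall>p. prime p \<longrightarrow> p \<le> Mq q \<longrightarrow> r p = 0"
  show "Delta N q \<ge> - 1 + invB r ((real (totient q) / N) / N) * (\<Sum>n\<in>{1..nat \<lfloor>N\<rfloor>}. r n)"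
    by (rule part2_core[OF h])
qed



end
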